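(* For $\varepsilon\in[0,1]$, let $C(\varepsilon)=\min\{C(P,Q) : P,Q \text{ probability distributions on a common countable set with } d_{\text{TV}}(P,Q)=\varepsilon\}$. This minimum exists and $$C(\varepsilon)=\begin{cases}-\frac12\log(1-\varepsilon^2) & \text{if } \varepsilon\in[0,1),\\ +\infty & \text{if } \varepsilon=1.\end{cases}$$ For $\varepsilon\in[0,1)$ it is achieved by the pair of 2-element distributions $P=\left(\frac{1-\varepsilon}{2},\frac{1+\varepsilon}{2}\right)$, $Q=\left(\frac{1+\varepsilon}{2},\frac{1-\varepsilon}{2}\right)$.
   Context: For probability distributions $P,Q$ on a countable set, $d_{\text{TV}}(P,Q)=\frac12\sum_x|P(x)-Q(x)|$ is the total variation distance, and the Chernoff information is $C(P,Q)=-\min_{\lambda\in[0,1]}\log\left(\sum_x P(x)^\lambda Q(x)^{1-\lambda}\right)$. Logarithms are natural. *)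

theory Defs
  imports "HOL-Probability.Probability"
begin

definition dtv :: "'a pmf \<Rightarrow> 'a pmf \<Rightarrow> real" where
  "dtv P Q = (1/2) * (\<Sum>\<^sub>\<infinity>x. \<bar>pmf P x - pmf Q x\<bar>)"

definition chernoff_sum :: "'a pmf \<Rightarrow> 'a pmf \<Rightarrow> real \<Rightarrow> real" where
  "chernoff_sum P Q l = (\<Sum>\<^sub>\<infinity>x. pmf P x powr l * pmf Q x powr (1 - l))"

text \<open>Chernoff information  C(P,Q) = - min_{lambda in [0,1]} log(sum ...), valued in
  the extended reals (log 0 = -infinity, so -log 0 = +infinity).  The minimum is
  rendered as an infimum, i.e. C is a supremum of -log.\<close>
definition chernoff :: "'a pmf \<Rightarrow> 'a pmf \<Rightarrow> ereal" where
  "chernoff P Q = (SUP l\<in>{0..1::real}.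
     (if chernoff_sum P Q l = 0 then \<infinity> else ereal (- ln (chernoff_sum P Q l))))"

definition two_point :: "real \<Rightarrow> nat pmf" where
  "two_point p1 = map_pmf (\<lambda>b. if b then 1 else 0) (bernoulli_pmf p1)"

end

theory Submission imports Defs begin
lemma pmf_summ: "pmf P summable_on A"
proof -
  have "Infinite_Sum.abs_summable_on (pmf P) A"
    using abs_summable_equivalent pmf_abs_summable by blast
  thus ?thesis using abs_summable_summable by blast
qed
lemma pmf_sum1: "infsum (pmf P) UNIV = 1"
  using infsetsum_infsum[OF pmf_abs_summable, of P UNIV] infsetsum_pmf_eq_1[of P UNIV] by simp

lemma pointwise:
  fixes p q t :: real
  assumes "p \<ge> 0" "q \<ge> 0" "t > 0"
  shows "\<bar>p - q\<bar> \<le> (t/2 + 1/(2*t)) * (p + q) + (1/t - t) * (sqrt p * sqrt q)"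
proof -
  define a where "a = sqrt p"
  define b where "b = sqrt q"
  have a0: "a \<ge> 0" and b0: "b \<ge> 0" using assms by (auto simp: a_def b_def)
  have pa: "p = a^2" using assms(1) by (simp add: a_def)
  have qb: "q = b^2" using assms(2) by (simp add: b_def)
  have k: "2 * (x*y) \<le> t * x^2 + y^2 / t" for x y :: real
  proof -
    have "0 \<le> (t*x - y)^2 / t" using assms by simp
    also have "(t*x - y)^2 / t = t * x^2 + y^2 / t - 2*(x*y)" using assms
      by (simp add: power2_eq_square field_simps)
    finally show ?thesis by simp
  qed
  have "\<bar>p - q\<bar> = \<bar>(a - b) * (a + b)\<bar>"
    by (simp add: pa qb power2_eq_square algebra_simps)
  also have "\<dots> = \<bar>a - b\<bar> * (a + b)" using a0 b0 by (simp add: abs_mult)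
  also have "2 * (\<bar>a - b\<bar> * (a + b)) \<le> t * \<bar>a-b\<bar>^2 + (a+b)^2 / t" by (rule k)
  hence "\<bar>a - b\<bar> * (a + b) \<le> (t * (a-b)^2 + (a+b)^2 / t)/2" by simp
  also have "(t * (a-b)^2 + (a+b)^2 / t)/2 = (t/2 + 1/(2*t)) * (a^2 + b^2) + (1/t - t) * (a * b)"
    using assms by (simp add: power2_eq_square field_simps)
  finally have X: "\<bar>p - q\<bar> \<le> (t/2 + 1/(2*t)) * (a^2 + b^2) + (1/t - t) * (a * b)" .
  have e1: "sqrt p * sqrt q = a * b" by (simp add: a_def b_def)
  show ?thesis using X by (simp only: e1 pa[symmetric] qb[symmetric])
qed

lemma bc_bound:
  fixes P Q :: "'a::countable pmf"
  defines "BC \<equiv> chernoff_sum P Q (1/2)"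
  shows "BC \<ge> 0" "dtv P Q \<ge> 0" "(dtv P Q)^2 \<le> 1 - BC^2"
proof -
  let ?p = "pmf P" and ?q = "pmf Q"
  let ?g = "\<lambda>x. sqrt (?p x) * sqrt (?q x)"
  have BCe: "BC = infsum ?g UNIV"
    unfolding BC_def chernoff_sum_def by (simp add: powr_half_sqrt)
  have spq: "(\<lambda>x. ?p x + ?q x) summable_on UNIV"
    by (intro summable_on_add pmf_summ)
  have sg: "?g summable_on UNIV"
  proof (rule summable_on_comparison_test[OF spq])
    fix x
    have "sqrt (?p x) * sqrt (?q x) \<le> (?p x + ?q x)/2"
      using arith_geo_mean_sqrt[of "?p x" "?q x"] by (simp add: real_sqrt_mult)
    moreover have "0 \<le> ?g x" by simp
    moreover have "0 \<le> ?p x" "0 \<le> ?q x" by simp_all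
    ultimately show "?g x \<le> ?p x + ?q x" by argo
  qed simp
  have sd: "(\<lambda>x. \<bar>?p x - ?q x\<bar>) summable_on UNIV"
  proof (rule summable_on_comparison_test[OF spq])
    fix x
    show "\<bar>?p x - ?q x\<bar> \<le> ?p x + ?q x" using pmf_nonneg[of P x] pmf_nonneg[of Q x] by arith
  qed simp
  have sumpq: "infsum (\<lambda>x. ?p x + ?q x) UNIV = 2"
    using infsum_add[OF pmf_summ[of P UNIV] pmf_summ[of Q UNIV]] pmf_sum1[of P] pmf_sum1[of Q] by simp
  show g0: "BC \<ge> 0" unfolding BCe by (rule infsum_nonneg) simp
  define d where "d = dtv P Q"
  have de: "2 * d = infsum (\<lambda>x. \<bar>?p x - ?q x\<bar>) UNIV" unfolding d_def dtv_def by simp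
  show d0: "dtv P Q \<ge> 0" unfolding dtv_def by (simp add: infsum_nonneg)
  have key: "2 * d \<le> (t/2 + 1/(2*t)) * 2 + (1/t - t) * BC" if t: "t > 0" for t
  proof -
    have "2 * d \<le> infsum (\<lambda>x. (t/2 + 1/(2*t)) * (?p x + ?q x) + (1/t - t) * ?g x) UNIV"
      unfolding de
      by (intro infsum_mono sd summable_on_add summable_on_cmult_right spq sg pointwise t) auto
    also have "\<dots> = (t/2 + 1/(2*t)) * 2 + (1/t - t) * BC"
      by (subst infsum_add) (auto intro!: summable_on_cmult_right spq sg
          simp: infsum_cmult_right' sumpq BCe)
    finally show ?thesis .
  qed
  show "(dtv P Q)^2 \<le> 1 - BC^2"
  proof (cases "d = 0")
    case True
    have "BC \<le> 1"
    proof -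
      have "BC = infsum ?g UNIV" by (rule BCe)
      also have "\<dots> \<le> infsum (\<lambda>x. (?p x + ?q x)/2) UNIV"
        apply (rule infsum_mono[OF sg])
        using summable_on_cmult_right[OF spq, of "1/2"] apply (simp add: divide_simps)
        using arith_geo_mean_sqrt by (simp add: real_sqrt_mult)
      also have "\<dots> = 1" using infsum_cmult_right'[of "1/2" "\<lambda>x. ?p x + ?q x" UNIV] sumpq by simp
      finally show ?thesis .
    qed
    hence "BC^2 \<le> 1" using g0 by (simp add: power_le_one)
    thus ?thesis using True d_def by simp
  next
    case False
    hence dpos: "d > 0" using d0 d_def by simp
    define t where "t = (1 + BC)/d"
    have tpos: "t > 0" using dpos g0 by (simp add: t_def)
    have "2 * d \<le> (t/2 + 1/(2*t)) * 2 + (1/t - t) * BC" by (rule key[OF tpos])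
    also have "\<dots> = t*(1-BC) + (1+BC)/t" using tpos by (simp add: field_simps)
    also have "(1+BC)/t = d" using dpos g0 by (simp add: t_def)
    also have "t*(1-BC) = (1+BC)*(1-BC)/d" by (simp add: t_def)
    finally have "d \<le> (1 - BC^2)/d" by (simp add: power2_eq_square algebra_simps)
    hence "d * d \<le> 1 - BC^2" using dpos by (simp add: field_simps)
    thus ?thesis by (simp add: d_def power2_eq_square)
  qed
qed

lemma pmf_two_point:
  assumes "0 \<le> p" "p \<le> 1"
  shows "pmf (two_point p) x = (if x = 0 then 1 - p else if x = 1 then p else 0)"
proof -
  have "pmf (two_point p) x = measure (measure_pmf (bernoulli_pmf p)) ((\<lambda>b. if b then 1 else 0) -` {x})"
    unfolding two_point_def by (rule pmf_map)
  also have "(\<lambda>b. if b then (1::nat) else 0) -` {x} = (if x = 0 then {False} else if x = 1 then {True} else {})"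
  proof (cases "x = 0")
    case True thus ?thesis by (auto simp: vimage_def)
  next
    case F: False
    show ?thesis
    proof (cases "x = 1")
      case True thus ?thesis by (auto simp: vimage_def)
    next
      case False thus ?thesis using F by (auto simp: vimage_def)
    qed
  qed
  finally show ?thesis using assms by (simp add: measure_pmf_single)
qed

lemma infsum_01:
  fixes f :: "nat \<Rightarrow> real"
  assumes "\<And>x. x \<noteq> 0 \<Longrightarrow> x \<noteq> 1 \<Longrightarrow> f x = 0"
  shows "infsum f UNIV = f 0 + f 1"
proof -
  have "infsum f UNIV = infsum f {0,1}"
    by (rule infsum_cong_neutral) (use assms in auto)
  thus ?thesis by simp
qed

lemma tp_vals:
  fixes e :: real assumes "0 \<le> e" "e \<le> 1"
  shows "pmf (two_point ((1 + e)/2)) 0 = (1 - e)/2"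
          "pmf (two_point ((1 + e)/2)) 1 = (1 + e)/2"
          "pmf (two_point ((1 - e)/2)) 0 = (1 + e)/2"
          "pmf (two_point ((1 - e)/2)) 1 = (1 - e)/2"
proof -
  have r1: "0 \<le> (1+e)/2" "(1+e)/2 \<le> 1" "0 \<le> (1-e)/2" "(1-e)/2 \<le> 1" using assms by simp_all
  have h1: "1 - (1+e)/2 = (1-e)/2" by (simp add: field_simps)
  have h2: "1-(1-e)/2 = (1+e)/2" by (simp add: field_simps)
  show "pmf (two_point ((1 + e)/2)) 0 = (1 - e)/2" using pmf_two_point[OF r1(1,2), of 0] h1 by simp
  show "pmf (two_point ((1 + e)/2)) 1 = (1 + e)/2" using pmf_two_point[OF r1(1,2), of 1] by simp
  show "pmf (two_point ((1 - e)/2)) 0 = (1 + e)/2" using pmf_two_point[OF r1(3,4), of 0] h2 by simp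
  show "pmf (two_point ((1 - e)/2)) 1 = (1 - e)/2" using pmf_two_point[OF r1(3,4), of 1] by simp
qed

lemma tp_other:
  fixes e :: real assumes "0 \<le> e" "e \<le> 1" "x \<noteq> 0" "x \<noteq> 1"
  shows "pmf (two_point ((1 + e)/2)) x = 0" "pmf (two_point ((1 - e)/2)) x = 0"
  using assms pmf_two_point[of "(1+e)/2" x] pmf_two_point[of "(1-e)/2" x] by simp_all

lemma dtv_two:
  fixes e :: real assumes "0 \<le> e" "e \<le> 1"
  shows "dtv (two_point ((1 + e)/2)) (two_point ((1 - e)/2)) = e"
  unfolding dtv_def using assms
  by (subst infsum_01) (auto simp: tp_vals[OF assms] tp_vals[OF assms, unfolded One_nat_def]
      tp_other[OF assms] abs_if field_simps)

lemma cs_two: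
  fixes e :: real assumes "0 \<le> e" "e \<le> 1"
  shows "chernoff_sum (two_point ((1 + e)/2)) (two_point ((1 - e)/2)) l =
    ((1-e)/2) powr l * ((1+e)/2) powr (1-l) + ((1+e)/2) powr l * ((1-e)/2) powr (1-l)"
  unfolding chernoff_sum_def
  by (subst infsum_01) (auto simp: tp_vals[OF assms] tp_vals[OF assms, unfolded One_nat_def] tp_other[OF assms])

lemma amgm_powr:
  fixes a b l :: real assumes "a > 0" "b > 0"
  shows "a powr l * b powr (1-l) + b powr l * a powr (1-l) \<ge> 2 * sqrt (a*b)"
proof -
  let ?x = "a powr l * b powr (1-l)" and ?y = "b powr l * a powr (1-l)"
  have "?x * ?y = (a powr l * a powr (1-l)) * (b powr l * b powr (1-l))" by (simp add: algebra_simps)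
  also have "\<dots> = a * b" using assms by (simp flip: powr_add)
  finally have xy: "?x * ?y = a * b" .
  have "sqrt (?x * ?y) \<le> (?x + ?y)/2" by (rule arith_geo_mean_sqrt) auto
  thus ?thesis using xy by simp
qed

lemma lower:
  fixes e :: real and P Q :: "'a::countable pmf"
  assumes "0 \<le> e" "e \<le> 1" "dtv P Q = e"
  shows "(if e < 1 then ereal (- (1/2) * ln (1 - e\<^sup>2)) else \<infinity>) \<le> chernoff P Q"
proof -
  define BC where "BC = chernoff_sum P Q (1/2)"
  have b0: "BC \<ge> 0" and bd: "e^2 \<le> 1 - BC^2" using bc_bound[of P Q] assms by (auto simp: BC_def)
  have up: "(if BC = 0 then \<infinity> else ereal (- ln BC)) \<le> chernoff P Q"
    unfolding chernoff_def BC_def by (rule SUP_upper) auto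
  show ?thesis
  proof (cases "BC = 0")
    case True thus ?thesis using up by simp
  next
    case False
    hence bp: "BC > 0" using b0 by simp
    have el: "e < 1"
    proof (rule ccontr)
      assume "\<not> e < 1" hence "e = 1" using assms by simp
      thus False using bd bp by simp
    qed
    have "BC \<le> sqrt (1 - e^2)" using bd b0 by (intro real_le_rsqrt) simp
    hence "ln BC \<le> ln (sqrt (1 - e^2))" using bp by (rule ln_mono)
    also have "\<dots> = ln (1 - e^2) / 2" using el assms
      using power_strict_mono[of e 1 2] by (intro ln_sqrt) simp
    finally have "- (1/2) * ln (1 - e\<^sup>2) \<le> - ln BC" by simp
    hence "ereal (- (1/2) * ln (1 - e\<^sup>2)) \<le> ereal (- ln BC)" by simp
    thus ?thesis using up el False by (simp del: ereal_less_eq)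
  qed
qed

theorem proposition2:
  fixes \<epsilon> :: real
  assumes "0 \<le> \<epsilon>" and "\<epsilon> \<le> 1"
  defines "Cval \<equiv> (if \<epsilon> < 1 then ereal (- (1/2) * ln (1 - \<epsilon>\<^sup>2)) else \<infinity>)"
  shows "(\<forall>(P::'a::countable pmf) Q. dtv P Q = \<epsilon> \<longrightarrow> Cval \<le> chernoff P Q)
       \<and> (\<exists>(P::nat pmf) Q. dtv P Q = \<epsilon> \<and> chernoff P Q = Cval)
       \<and> (\<epsilon> < 1 \<longrightarrow>
            pmf (two_point ((1 + \<epsilon>)/2)) 0 = (1 - \<epsilon>)/2
          \<and> pmf (two_point ((1 + \<epsilon>)/2)) 1 = (1 + \<epsilon>)/2
          \<and> pmf (two_point ((1 - \<epsilon>)/2)) 0 = (1 + \<epsilon>)/2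
          \<and> pmf (two_point ((1 - \<epsilon>)/2)) 1 = (1 - \<epsilon>)/2
          \<and> dtv (two_point ((1 + \<epsilon>)/2)) (two_point ((1 - \<epsilon>)/2)) = \<epsilon>
          \<and> chernoff (two_point ((1 + \<epsilon>)/2)) (two_point ((1 - \<epsilon>)/2)) = Cval)"
proof -
  let ?P = "two_point ((1 + \<epsilon>)/2)" and ?Q = "two_point ((1 - \<epsilon>)/2)"
  have dPQ: "dtv ?P ?Q = \<epsilon>" by (rule dtv_two[OF assms(1,2)])
  have lowPQ: "Cval \<le> chernoff ?P ?Q" unfolding Cval_def by (rule lower[OF assms(1,2) dPQ])
  have eqPQ: "chernoff ?P ?Q = Cval"
  proof (cases "\<epsilon> < 1")
    case False thus ?thesis using lowPQ by (simp add: Cval_def)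
  next
    case True
    let ?a = "(1-\<epsilon>)/2" and ?b = "(1+\<epsilon>)/2"
    have a: "?a > 0" "?b > 0" using True assms by auto
    have ab: "2 * sqrt (?a * ?b) = sqrt (1 - \<epsilon>^2)"
    proof -
      have "?a * ?b = (1 - \<epsilon>^2) / 4" by (simp add: power2_eq_square field_simps)
      hence "sqrt (?a * ?b) = sqrt (1 - \<epsilon>^2) / 2" by (simp add: real_sqrt_divide)
      thus ?thesis by simp
    qed
    have pos: "1 - \<epsilon>^2 > 0" using True assms power_strict_mono[of \<epsilon> 1 2] by simp
    have "chernoff ?P ?Q \<le> Cval" unfolding chernoff_def
    proof (rule SUP_least)
      fix l :: real assume "l \<in> {0..1}"
      define S where "S = chernoff_sum ?P ?Q l"
      have Sge: "S \<ge> sqrt (1 - \<epsilon>^2)" unfolding S_def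
        using cs_two[OF assms(1,2), of l] amgm_powr[OF a, of l] ab by simp
      have sq: "sqrt (1 - \<epsilon>^2) > 0" using pos by simp
      have Sp: "S > 0" using Sge sq by linarith
      have "ln (sqrt (1 - \<epsilon>^2)) \<le> ln S" using Sge sq by (rule ln_mono)
      moreover have "ln (sqrt (1 - \<epsilon>^2)) = ln (1 - \<epsilon>^2) / 2" using pos by (intro ln_sqrt) simp
      ultimately have "- ln S \<le> - (1/2) * ln (1 - \<epsilon>\<^sup>2)" by simp
      thus "(if S = 0 then \<infinity> else ereal (- ln S)) \<le> Cval"
        using Sp True by (simp add: Cval_def)
    qed
    thus ?thesis using lowPQ by simp
  qed
  show ?thesis
  proof (intro conjI allI impI)
    fix P Q :: "'a pmf" assume "dtv P Q = \<epsilon>"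
    thus "Cval \<le> chernoff P Q" unfolding Cval_def using assms by (intro lower) auto
  next
    show "\<exists>(P::nat pmf) Q. dtv P Q = \<epsilon> \<and> chernoff P Q = Cval" using dPQ eqPQ by blast
  qed (use assms dPQ eqPQ tp_vals[OF assms(1,2)] in \<open>auto\<close>)
qed
end
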